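(* Let $\Gamma>0$, $\lambda>0$, $a>0$ and $C$ be real numbers with $0\le C<2a\lambda^2$. Let $f\in L^1(\mathbb{R})$ satisfy $|f(\xi)|\le Ce^{-a|\xi|}$ for all $|\xi|\le\sqrt2\lambda$, and let $v\in L^1(\mathbb{R})$ satisfy $|v(\xi)|\le\Gamma e^{-a|\xi|}$ for all $\xi\in\mathbb{R}$. Then for all $\xi\in\mathbb{R}$, $$|R[f](\xi)|\le e^{-a|\xi|}\left(\frac{C^2}{\lambda^2}\cdot\frac{1+a|\xi|}{a}\left(\frac18+\frac1{2\pi}\exp\!\left(\frac{C}{4\pi\lambda^2a}\right)\exp\!\left(\frac{C}{4\pi\lambda^2}|\xi|\right)\right)+\Gamma\right).$$
   Context: Fix an infinitely differentiable $b:\mathbb{R}\to[0,1]$ with $b(\xi)=1$ for $|\xi|\le\lambda$ and $b(\xi)=0$ for $|\xi|\ge\sqrt2\lambda$. Convolution is normalized: $f*g(\xi)=\frac1{2\pi}\int f(\eta)g(\xi-\eta)\,d\eta$; $f^{*m}$ is the $m$-fold convolution. For $f\in L^1$: $W_b[f](\xi)=f(\xi)\frac{b(\xi)}{4\lambda^2-\xi^2}$, $\widetilde W_b[f](\xi)=f(\xi)\frac{i\xi\,b(\xi)}{4\lambda^2-\xi^2}$, $\exp_2^*[f]=\sum_{m\ge2}\frac{f^{*m}}{m!}$, and $R[f]=\frac14\widetilde W_b[f]*\widetilde W_b[f]-4\lambda^2\exp_2^*[W_b[f]]+v$. *)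

theory Defs
  imports "HOL-Analysis.Analysis"
begin

definition smooth_real :: "(real \<Rightarrow> real) \<Rightarrow> bool" where
  "smooth_real g \<longleftrightarrow> (\<forall>k. \<forall>x. ((deriv ^^ k) g) differentiable (at x))"

definition nconv :: "(real \<Rightarrow> complex) \<Rightarrow> (real \<Rightarrow> complex) \<Rightarrow> real \<Rightarrow> complex" where
  "nconv f g \<xi> = complex_of_real (1 / (2 * pi)) * (LINT \<eta>|lborel. f \<eta> * g (\<xi> - \<eta>))"

text \<open>m-fold convolution power (meaningful for m >= 1; the 0 case is unused).\<close>
fun conv_power :: "(real \<Rightarrow> complex) \<Rightarrow> nat \<Rightarrow> real \<Rightarrow> complex" where
  "conv_power f 0 = (\<lambda>_. 0)"
| "conv_power f (Suc 0) = f"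
| "conv_power f (Suc (Suc n)) = nconv f (conv_power f (Suc n))"

definition W_b :: "(real \<Rightarrow> real) \<Rightarrow> real \<Rightarrow> (real \<Rightarrow> complex) \<Rightarrow> real \<Rightarrow> complex" where
  "W_b b lam f \<xi> = f \<xi> * complex_of_real (b \<xi> / (4 * lam\<^sup>2 - \<xi>\<^sup>2))"

definition W_b_tilde :: "(real \<Rightarrow> real) \<Rightarrow> real \<Rightarrow> (real \<Rightarrow> complex) \<Rightarrow> real \<Rightarrow> complex" where
  "W_b_tilde b lam f \<xi> = f \<xi> * (\<i> * complex_of_real (\<xi> * b \<xi> / (4 * lam\<^sup>2 - \<xi>\<^sup>2)))"

definition exp2_star :: "(real \<Rightarrow> complex) \<Rightarrow> real \<Rightarrow> complex" where
  "exp2_star f \<xi> = (\<Sum>n. conv_power f (n + 2) \<xi> / of_nat (fact (n + 2)))"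

definition R_op :: "(real \<Rightarrow> real) \<Rightarrow> real \<Rightarrow> (real \<Rightarrow> complex) \<Rightarrow> (real \<Rightarrow> complex) \<Rightarrow> real \<Rightarrow> complex" where
  "R_op b lam v f \<xi> =
     (1/4) * nconv (W_b_tilde b lam f) (W_b_tilde b lam f) \<xi>
     - complex_of_real (4 * lam\<^sup>2) * exp2_star (W_b b lam f) \<xi> + v \<xi>"

end

theory Submission
  imports Defs "HOL-Real_Asymp.Real_Asymp"
begin


fun phi :: "real \<Rightarrow> nat \<Rightarrow> real \<Rightarrow> real" where
  "phi c 0 y = 0"
| "phi c (Suc n) y = c * phi c n y + y ^ n / fact n"

lemma phi_deriv: "(phi c (Suc n) has_real_derivative phi c n y) (at y)"
proof (induction n arbitrary: y)
  case 0
  show ?case by (auto intro!: derivative_eq_intros)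
next
  case (Suc n)
  have e: "phi c (Suc (Suc n)) = (\<lambda>y. c * phi c (Suc n) y + y ^ Suc n / fact (Suc n))"
    by (rule ext) simp
  have "((\<lambda>y. c * phi c (Suc n) y + y ^ Suc n / fact (Suc n)) has_real_derivative
        c * phi c n y + (of_nat (Suc n) * y ^ n) / fact (Suc n)) (at y)"
  proof (rule DERIV_add[OF DERIV_cmult[OF Suc.IH]])
    show "((\<lambda>y. y ^ Suc n / fact (Suc n)) has_real_derivative (of_nat (Suc n) * y ^ n) / fact (Suc n)) (at y)"
      using DERIV_cdivide[OF DERIV_pow[of "Suc n" y UNIV], of "fact (Suc n)"] by simp
  qed
  moreover have "(of_nat (Suc n) * y ^ n) / fact (Suc n) = y ^ n / (fact n :: real)"
    by (simp add: fact_Suc del: of_nat_Suc)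
  ultimately show ?case unfolding e by simp
qed

lemma phi_cont: "continuous_on UNIV (phi c n)"
proof (cases n)
  case 0 then show ?thesis by simp
next
  case (Suc m)
  show ?thesis unfolding Suc
    by (intro continuous_at_imp_continuous_on ballI DERIV_isCont[OF phi_deriv])
qed

lemma phi_meas[measurable]: "phi c n \<in> borel_measurable borel"
  by (rule borel_measurable_continuous_onI[OF phi_cont])

lemma phi_nonneg: "c \<ge> 0 \<Longrightarrow> y \<ge> 0 \<Longrightarrow> phi c n y \<ge> 0"
  by (induction n) auto

lemma phi_le_Suc: "c \<ge> 0 \<Longrightarrow> y \<ge> 0 \<Longrightarrow> c * phi c n y \<le> phi c (Suc n) y"
  by simp

lemma phi_Suc_0: "n \<ge> 1 \<Longrightarrow> phi c (Suc n) 0 = c * phi c n 0"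
  by (cases n) auto

lemma phi_mono: assumes "c \<ge> 0" "0 \<le> y" "y \<le> z" shows "phi c n y \<le> phi c n z"
proof (cases n)
  case 0 then show ?thesis by simp
next
  case (Suc m)
  have "phi c (Suc m) y \<le> phi c (Suc m) z"
  proof (rule DERIV_nonneg_imp_nondecreasing[OF assms(3)])
    fix x assume "y \<le> x" "x \<le> z"
    then show "\<exists>d. (phi c (Suc m) has_real_derivative d) (at x) \<and> 0 \<le> d"
      using assms by (intro exI[of _ "phi c m x"] conjI phi_deriv phi_nonneg) auto
  qed
  then show ?thesis using Suc by simp
qed

lemma phi_shift:
  assumes a: "a > 0" and y: "y \<ge> 0" and t: "t \<ge> 0"
  shows "phi (1/a) n (y + t) \<le> phi (1/a) n y * exp (a * t)"
proof (cases n)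
  case 0 then show ?thesis by simp
next
  case (Suc m)
  define h where "h s = phi (1/a) (Suc m) (y + s) * exp (- a * s)" for s
  have "h t \<le> h 0"
  proof (rule DERIV_nonpos_imp_nonincreasing[OF t])
    fix s assume s: "0 \<le> s" "s \<le> t"
    have d: "(h has_real_derivative
        phi (1/a) m (y + s) * exp (- a * s) + phi (1/a) (Suc m) (y + s) * (exp (- a * s) * (- a))) (at s)"
    proof -
      have "((\<lambda>s. phi (1/a) (Suc m) (y + s)) has_real_derivative phi (1/a) m (y + s) * 1) (at s)"
        by (rule DERIV_chain2[OF phi_deriv]) (auto intro!: derivative_eq_intros)
      then show ?thesis unfolding h_def
        by (intro DERIV_mult[THEN DERIV_cong]) (auto intro!: derivative_eq_intros)
    qed
    have "phi (1/a) m (y + s) \<le> a * phi (1/a) (Suc m) (y + s)"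
    proof -
      have "a * phi (1/a) (Suc m) (y + s) = phi (1/a) m (y + s) + a * ((y+s)^m / fact m)"
        using a by (simp add: algebra_simps)
      moreover have "a * ((y+s)^m / fact m) \<ge> 0" using a y s by simp
      ultimately show ?thesis by linarith
    qed
    then have "exp (- a * s) * (phi (1/a) m (y + s) - a * phi (1/a) (Suc m) (y + s)) \<le> 0"
      by (intro mult_nonneg_nonpos) auto
    moreover have "phi (1/a) m (y + s) * exp (- a * s) + phi (1/a) (Suc m) (y + s) * (exp (- a * s) * (- a))
       = exp (- a * s) * (phi (1/a) m (y + s) - a * phi (1/a) (Suc m) (y + s))"
      by (simp only: algebra_simps)
    ultimately have "phi (1/a) m (y + s) * exp (- a * s) + phi (1/a) (Suc m) (y + s) * (exp (- a * s) * (- a)) \<le> 0"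
      by simp
    with d show "\<exists>d. (h has_real_derivative d) (at s) \<and> d \<le> 0" by blast
  qed
  then have "phi (1/a) (Suc m) (y + t) * exp (- a * t) \<le> phi (1/a) (Suc m) y"
    by (simp add: h_def)
  then have "phi (1/a) (Suc m) (y + t) * exp (- a * t) * exp (a * t) \<le> phi (1/a) (Suc m) y * exp (a * t)"
    by (rule mult_right_mono) simp
  then show ?thesis using Suc by (simp add: mult.assoc flip: exp_add)
qed

lemma phi_sum: "phi c n y = (\<Sum>k<n. c ^ (n - 1 - k) * y ^ k / fact k)"
proof (induction n)
  case 0 then show ?case by simp
next
  case (Suc n)
  have "phi c (Suc n) y = (\<Sum>k<n. c * (c ^ (n - 1 - k) * y ^ k / fact k)) + y ^ n / fact n"
    by (simp add: Suc sum_distrib_left)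
  also have "(\<Sum>k<n. c * (c ^ (n - 1 - k) * y ^ k / fact k)) = (\<Sum>k<n. c ^ (Suc n - 1 - k) * y ^ k / fact k)"
    by (intro sum.cong refl) (auto simp: Suc_diff_Suc power_Suc[symmetric] simp del: power_Suc)
  finally show ?case by simp
qed



definition Psi :: "real \<Rightarrow> nat \<Rightarrow> real \<Rightarrow> real \<Rightarrow> real" where
  "Psi a n \<xi> \<eta> = exp (- a * \<bar>\<eta>\<bar>) * exp (- a * \<bar>\<xi> - \<eta>\<bar>) * phi (1/a) n \<bar>\<xi> - \<eta>\<bar>"

lemma exp_tail_int:
  assumes a: "a > 0" and k: "k \<ge> 0"
  shows "(\<integral>\<^sup>+\<eta>. ennreal (k * exp (- a * (\<eta> - t))) * indicator {t..} \<eta> \<partial>lborel) = ennreal (k / a)"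
proof -
  have "(\<integral>\<^sup>+\<eta>. ennreal (k * exp (- a * (\<eta> - t))) * indicator {t..} \<eta> \<partial>lborel)
      = ennreal (0 - (- (k / a) * exp (- a * (t - t))))"
  proof (rule nn_integral_FTC_atLeast[where F="\<lambda>\<eta>. - (k / a) * exp (- a * (\<eta> - t))" and T=0])
    show "(\<lambda>\<eta>. k * exp (- a * (\<eta> - t))) \<in> borel_measurable borel" by measurable
    fix x :: real assume "t \<le> x"
    show "((\<lambda>\<eta>. - (k / a) * exp (- a * (\<eta> - t))) has_real_derivative k * exp (- a * (x - t))) (at x)"
      using a by (auto intro!: derivative_eq_intros simp: field_simps)
    show "0 \<le> k * exp (- a * (x - t))" using k by simp
  next
    show "((\<lambda>\<eta>. - (k / a) * exp (- a * (\<eta> - t))) \<longlongrightarrow> 0) at_top"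
      using a by real_asymp
  qed
  then show ?thesis by simp
qed

lemma le3: fixes x a b c :: ennreal
  shows "x \<le> a \<Longrightarrow> x \<le> a + b + c" "x \<le> b \<Longrightarrow> x \<le> a + b + c" "x \<le> c \<Longrightarrow> x \<le> a + b + c"
proof -
  have "a \<le> a + b + c" "b \<le> a + b + c" "c \<le> a + b + c"
    by (metis add.assoc add.commute le_iff_add)+
  then show "x \<le> a \<Longrightarrow> x \<le> a + b + c" "x \<le> b \<Longrightarrow> x \<le> a + b + c" "x \<le> c \<Longrightarrow> x \<le> a + b + c"
    by (meson order_trans)+
qed

lemma conv_int_pos:
  assumes a: "a > 0" and n: "n \<ge> 1" and xi: "\<xi> \<ge> 0" and D: "D \<ge> 0"
  shows "(\<integral>\<^sup>+\<eta>. ennreal (D * Psi a n \<xi> \<eta>) \<partial>lborel)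
     \<le> ennreal (D * exp (- a * \<xi>) * (phi (1/a) (Suc n) \<xi> + (1/a) * phi (1/a) n \<xi>))"
proof -
  define e where "e = exp (- a * \<xi>)"
  define p where "p = phi (1/a)"
  have e: "e > 0" unfolding e_def by simp
  have pnn: "y \<ge> 0 \<Longrightarrow> p m y \<ge> 0" for m y unfolding p_def using a by (intro phi_nonneg) auto
  define f1 where "f1 \<eta> = D * e * p n \<xi> * exp (- a * (\<eta> - 0))" for \<eta>
  define f2 where "f2 \<eta> = D * e * p n (\<xi> - \<eta>)" for \<eta>
  define f3 where "f3 \<eta> = D * e * p n 0 * exp (- a * (\<eta> - \<xi>))" for \<eta>
  have pw: "ennreal (D * Psi a n \<xi> \<eta>) \<le> ennreal (f1 (- \<eta>)) * indicator {..0} \<eta>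
      + ennreal (f2 \<eta>) * indicator {0..\<xi>} \<eta> + ennreal (f3 \<eta>) * indicator {\<xi>..} \<eta>" for \<eta>
  proof -
    consider "\<eta> \<le> 0" | "0 \<le> \<eta>" "\<eta> \<le> \<xi>" | "\<xi> \<le> \<eta>" by linarith
    then show ?thesis
    proof cases
      case 1
      have "p n (\<xi> + (- \<eta>)) \<le> p n \<xi> * exp (a * (- \<eta>))"
        unfolding p_def using 1 xi a by (intro phi_shift) auto
      then have "D * Psi a n \<xi> \<eta> \<le> D * (exp (a * \<eta>) * exp (- a * (\<xi> - \<eta>)) * (p n \<xi> * exp (a * (- \<eta>))))"
        unfolding Psi_def p_def using 1 xi D
        by (intro mult_left_mono) (auto intro!: mult_left_mono simp: abs_of_nonpos abs_of_nonneg)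
      also have "\<dots> = f1 (- \<eta>)"
        unfolding f1_def e_def by (simp add: algebra_simps flip: exp_add)
      finally have "ennreal (D * Psi a n \<xi> \<eta>) \<le> ennreal (f1 (- \<eta>)) * indicator {..0} \<eta>"
        using 1 by (simp add: indicator_def ennreal_leI)
      then show ?thesis by (rule le3(1))
    next
      case 2
      have "D * Psi a n \<xi> \<eta> = f2 \<eta>"
        unfolding Psi_def p_def f2_def e_def using 2 by (simp add: algebra_simps flip: exp_add)
      then have "ennreal (D * Psi a n \<xi> \<eta>) \<le> ennreal (f2 \<eta>) * indicator {0..\<xi>} \<eta>"
        using 2 by (simp add: indicator_def)
      then show ?thesis by (rule le3(2))
    next
      case 3
      have "p n (0 + (\<eta> - \<xi>)) \<le> p n 0 * exp (a * (\<eta> - \<xi>))"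
        unfolding p_def using 3 a by (intro phi_shift) auto
      then have "D * Psi a n \<xi> \<eta> \<le> D * (exp (- a * \<eta>) * exp (- a * (\<eta> - \<xi>)) * (p n 0 * exp (a * (\<eta> - \<xi>))))"
        unfolding Psi_def p_def using 3 xi D
        by (intro mult_left_mono) (auto intro!: mult_left_mono simp: abs_of_nonpos abs_of_nonneg)
      also have "\<dots> = f3 \<eta>"
        unfolding f3_def e_def by (simp add: algebra_simps flip: exp_add)
      finally have "ennreal (D * Psi a n \<xi> \<eta>) \<le> ennreal (f3 \<eta>) * indicator {\<xi>..} \<eta>"
        using 3 by (simp add: indicator_def ennreal_leI)
      then show ?thesis by (rule le3(3))
    qed
  qed
  have [measurable]: "f1 \<in> borel_measurable borel" "f2 \<in> borel_measurable borel" "f3 \<in> borel_measurable borel"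
    unfolding f1_def f2_def f3_def p_def by measurable
  have I1: "(\<integral>\<^sup>+\<eta>. ennreal (f1 (- \<eta>)) * indicator {..0} \<eta> \<partial>lborel) = ennreal (D * e * p n \<xi> / a)"
  proof -
    have "(\<integral>\<^sup>+\<eta>. ennreal (f1 (- \<eta>)) * indicator {..0} \<eta> \<partial>lborel)
        = (\<integral>\<^sup>+\<eta>. ennreal (f1 (- (0 + -1 * \<eta>))) * indicator {..0} (0 + -1 * \<eta>) \<partial>lborel)"
      using nn_integral_real_affine[of "\<lambda>\<eta>. ennreal (f1 (- \<eta>)) * indicator {..0} \<eta>" "-1" 0] by simp
    also have "\<dots> = (\<integral>\<^sup>+\<eta>. ennreal (D * e * p n \<xi> * exp (- a * (\<eta> - 0))) * indicator {0..} \<eta> \<partial>lborel)"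
      by (intro nn_integral_cong) (auto simp: f1_def indicator_def)
    also have "\<dots> = ennreal (D * e * p n \<xi> / a)"
      using a D e pnn[of \<xi> n] xi by (intro exp_tail_int) auto
    finally show ?thesis .
  qed
  have I3: "(\<integral>\<^sup>+\<eta>. ennreal (f3 \<eta>) * indicator {\<xi>..} \<eta> \<partial>lborel) = ennreal (D * e * p n 0 / a)"
    unfolding f3_def using a D e pnn[of 0 n] by (intro exp_tail_int) auto
  have I2: "(\<integral>\<^sup>+\<eta>. ennreal (f2 \<eta>) * indicator {0..\<xi>} \<eta> \<partial>lborel)
      = ennreal ((- (D * e * p (Suc n) (\<xi> - \<xi>))) - (- (D * e * p (Suc n) (\<xi> - 0))))"
  proof (rule nn_integral_FTC_Icc[where F="\<lambda>\<eta>. - (D * e * p (Suc n) (\<xi> - \<eta>))"])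
    fix x assume x: "x \<in> {0..\<xi>}"
    have "((\<lambda>\<eta>. p (Suc n) (\<xi> - \<eta>)) has_real_derivative p n (\<xi> - x) * (- 1)) (at x)"
      unfolding p_def by (rule DERIV_chain2[OF phi_deriv]) (auto intro!: derivative_eq_intros)
    then show "((\<lambda>\<eta>. - (D * e * p (Suc n) (\<xi> - \<eta>))) has_real_derivative f2 x) (at x)"
      unfolding f2_def by (auto intro!: derivative_eq_intros)
    show "0 \<le> f2 x" unfolding f2_def using x D e pnn[of "\<xi> - x" n] by auto
  qed (use xi in auto)
  have p0: "p (Suc n) 0 = (1/a) * p n 0" unfolding p_def using n by (rule phi_Suc_0)
  have "(\<integral>\<^sup>+\<eta>. ennreal (D * Psi a n \<xi> \<eta>) \<partial>lborel)
     \<le> (\<integral>\<^sup>+\<eta>. ennreal (f1 (- \<eta>)) * indicator {..0} \<eta>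
      + ennreal (f2 \<eta>) * indicator {0..\<xi>} \<eta> + ennreal (f3 \<eta>) * indicator {\<xi>..} \<eta> \<partial>lborel)"
    by (intro nn_integral_mono pw)
  also have "\<dots> = (\<integral>\<^sup>+\<eta>. ennreal (f1 (- \<eta>)) * indicator {..0} \<eta> \<partial>lborel)
      + (\<integral>\<^sup>+\<eta>. ennreal (f2 \<eta>) * indicator {0..\<xi>} \<eta> \<partial>lborel)
      + (\<integral>\<^sup>+\<eta>. ennreal (f3 \<eta>) * indicator {\<xi>..} \<eta> \<partial>lborel)"
    by (simp add: nn_integral_add)
  also have "\<dots> = ennreal (D * e * p n \<xi> / a) + ennreal (D * e * p (Suc n) \<xi> - D * e * p (Suc n) 0)
      + ennreal (D * e * p n 0 / a)"
    unfolding I1 I2 I3 by simp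
  also have "\<dots> = ennreal (D * e * p n \<xi> / a + (D * e * p (Suc n) \<xi> - D * e * p (Suc n) 0) + D * e * p n 0 / a)"
  proof -
    have "p (Suc n) 0 \<le> p (Suc n) \<xi>" unfolding p_def using a xi by (intro phi_mono) auto
    then have "D * e * p (Suc n) 0 \<le> D * e * p (Suc n) \<xi>" using D e by (intro mult_left_mono) auto
    then have h2: "0 \<le> D * e * p (Suc n) \<xi> - D * e * p (Suc n) 0" by simp
    have h1: "0 \<le> D * e * p n \<xi> / a" using D e pnn[of \<xi> n] a xi by simp
    have h3: "0 \<le> D * e * p n 0 / a" using D e pnn[of 0 n] a by simp
    show ?thesis using h1 h2 h3 by (simp add: ennreal_plus)
  qed
  also have "D * e * p n \<xi> / a + (D * e * p (Suc n) \<xi> - D * e * p (Suc n) 0) + D * e * p n 0 / a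
      = D * exp (- a * \<xi>) * (phi (1/a) (Suc n) \<xi> + (1/a) * phi (1/a) n \<xi>)"
    unfolding p0 by (simp add: e_def p_def field_simps del: phi.simps)
  finally show ?thesis .
qed


lemma Psi_meas[measurable]: "Psi a n \<xi> \<in> borel_measurable borel"
  unfolding Psi_def by measurable

lemma conv_int:
  assumes a: "a > 0" and n: "n \<ge> 1" and D: "D \<ge> 0"
  shows "(\<integral>\<^sup>+\<eta>. ennreal (D * Psi a n \<xi> \<eta>) \<partial>lborel)
     \<le> ennreal (D * exp (- a * \<bar>\<xi>\<bar>) * (phi (1/a) (Suc n) \<bar>\<xi>\<bar> + (1/a) * phi (1/a) n \<bar>\<xi>\<bar>))"
proof (cases "\<xi> \<ge> 0")
  case True
  then show ?thesis using conv_int_pos[OF a n True D] by simp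
next
  case False
  have "(\<integral>\<^sup>+\<eta>. ennreal (D * Psi a n \<xi> \<eta>) \<partial>lborel)
      = (\<integral>\<^sup>+\<eta>. ennreal (D * Psi a n \<xi> (0 + -1 * \<eta>)) \<partial>lborel)"
    using nn_integral_real_affine[of "\<lambda>\<eta>. ennreal (D * Psi a n \<xi> \<eta>)" "-1" 0] by simp
  also have "\<dots> = (\<integral>\<^sup>+\<eta>. ennreal (D * Psi a n (- \<xi>) \<eta>) \<partial>lborel)"
    by (intro nn_integral_cong) (simp add: Psi_def abs_minus_commute add.commute)
  also have "\<dots> \<le> ennreal (D * exp (- a * (- \<xi>)) * (phi (1/a) (Suc n) (- \<xi>) + (1/a) * phi (1/a) n (- \<xi>)))"
    using False by (intro conv_int_pos[OF a n _ D]) auto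
  finally show ?thesis using False by simp
qed

lemma conv_norm:
  fixes g h :: "real \<Rightarrow> complex"
  assumes a: "a > 0" and n: "n \<ge> 1" and K: "K \<ge> 0" and M: "M \<ge> 0"
    and hg: "\<And>\<eta>. norm (g \<eta>) \<le> K * exp (- a * \<bar>\<eta>\<bar>)"
    and hh: "\<And>z. norm (h z) \<le> M * exp (- a * \<bar>z\<bar>) * phi (1/a) n \<bar>z\<bar>"
  shows "norm (nconv g h \<xi>) \<le> 1 / (2 * pi) *
     (K * M * exp (- a * \<bar>\<xi>\<bar>) * (phi (1/a) (Suc n) \<bar>\<xi>\<bar> + (1/a) * phi (1/a) n \<bar>\<xi>\<bar>))"
proof -
  define B where "B = K * M * exp (- a * \<bar>\<xi>\<bar>) * (phi (1/a) (Suc n) \<bar>\<xi>\<bar> + (1/a) * phi (1/a) n \<bar>\<xi>\<bar>)"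
  have B0: "B \<ge> 0" unfolding B_def using K M a
    by (intro mult_nonneg_nonneg add_nonneg_nonneg phi_nonneg) auto
  have "norm (LINT \<eta>|lborel. g \<eta> * h (\<xi> - \<eta>)) \<le> B"
  proof (cases "integrable lborel (\<lambda>\<eta>. g \<eta> * h (\<xi> - \<eta>))")
    case True
    have "ennreal (norm (LINT \<eta>|lborel. g \<eta> * h (\<xi> - \<eta>))) \<le> (\<integral>\<^sup>+\<eta>. norm (g \<eta> * h (\<xi> - \<eta>)) \<partial>lborel)"
      by (rule integral_norm_bound_ennreal[OF True])
    also have "\<dots> \<le> (\<integral>\<^sup>+\<eta>. ennreal ((K * M) * Psi a n \<xi> \<eta>) \<partial>lborel)"
    proof (intro nn_integral_mono ennreal_leI)
      fix \<eta>
      have "norm (g \<eta> * h (\<xi> - \<eta>)) = norm (g \<eta>) * norm (h (\<xi> - \<eta>))" by (simp add: norm_mult)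
      also have "\<dots> \<le> (K * exp (- a * \<bar>\<eta>\<bar>)) * (M * exp (- a * \<bar>\<xi> - \<eta>\<bar>) * phi (1/a) n \<bar>\<xi> - \<eta>\<bar>)"
        by (intro mult_mono hg hh) (use K in auto)
      also have "\<dots> = (K * M) * Psi a n \<xi> \<eta>" by (simp add: Psi_def)
      finally show "norm (g \<eta> * h (\<xi> - \<eta>)) \<le> (K * M) * Psi a n \<xi> \<eta>" .
    qed
    also have "\<dots> \<le> ennreal B" unfolding B_def using conv_int[OF a n, of "K * M" \<xi>] K M
      by (simp add: mult.assoc)
    finally show ?thesis using B0 by (simp add: ennreal_le_iff)
  next
    case False
    then show ?thesis using B0 by (simp add: not_integrable_integral_eq)
  qed
  moreover have "norm (nconv g h \<xi>) = norm (LINT \<eta>|lborel. g \<eta> * h (\<xi> - \<eta>)) / (2 * pi)"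
    unfolding nconv_def by (simp add: norm_mult norm_divide)
  ultimately have "norm (nconv g h \<xi>) \<le> 1 / (2 * pi) * B"
    by (simp add: divide_right_mono)
  then show ?thesis unfolding B_def .
qed



lemma fact_aux: "i \<ge> 1 \<Longrightarrow> 6 * 2 ^ i * fact i \<le> (fact (i+1) * fact (i+2) :: nat)"
proof (induction i rule: nat_induct_at_least)
  case base
  then show ?case by (simp add: numeral_eq_Suc)
next
  case (Suc i)
  have "6 * 2 ^ Suc i * fact (Suc i) = 2 * (Suc i) * (6 * 2 ^ i * fact i)" by (simp add: algebra_simps)
  also have "\<dots> \<le> 2 * (Suc i) * (fact (i+1) * fact (i+2))" by (intro mult_left_mono Suc.IH) simp
  also have "\<dots> \<le> fact (Suc i + 1) * fact (Suc i + 2)"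
  proof -
    have eq: "fact (Suc i + 1) * fact (Suc i + 2) = (i+2) * (i+3) * (fact (i+1) * fact (i+2))"
      by (simp add: algebra_simps)
    show ?thesis unfolding eq by (rule mult_right_mono) (simp_all add: algebra_simps)
  qed
  finally show ?case .
qed

lemma fact_split_le: "i \<le> n \<Longrightarrow> fact (i+2) * fact (n - i) \<le> (fact (n+2) :: nat)"
proof -
  assume "i \<le> n"
  then have "i + 2 + (n - i) = n + 2" by simp
  then show ?thesis using fact_fact_dvd_fact[of "i+2" "n-i"] by (metis dvd_imp_le fact_gt_zero)
qed

lemma series_bound:
  fixes c x y :: real
  assumes c: "c > 0" and x: "x \<ge> 0" and y: "y \<ge> 0" and r: "2 * x * c \<le> 1/3"
  defines "U \<equiv> \<lambda>n. (2*x)^n * phi c (n+2) y / fact (n+2)"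
  shows "summable U \<and> suminf U \<le> 3*c/4 + y/2 + y * exp (x*y) / 4"
proof -
  define q where "q = 2 * x * c"
  have q0: "q \<ge> 0" and q1: "q \<le> 1/3" using c x r by (auto simp: q_def)
  define A where "A n = c * q^n / fact (n+2)" for n
  define a where "a i = (2*x)^i * y^(i+1) / (fact (i+1) * fact (i+2))" for i
  define b where "b j = q^j / fact j" for j
  have a0: "a i \<ge> 0" for i unfolding a_def using x y by simp
  have b0: "b i \<ge> 0" for i unfolding b_def using q0 by simp
  have A0: "A i \<ge> 0" for i unfolding A_def using q0 c by simp
  have U0: "U n \<ge> 0" for n unfolding U_def using x y c by (intro divide_nonneg_pos mult_nonneg_nonneg phi_nonneg) auto
  have Ule: "U n \<le> A n + (\<Sum>i\<le>n. a i * b (n - i))" for n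
  proof -
    have ph: "phi c (n+2) y = c^(n+1) + (\<Sum>i<n+1. c^(n-i) * y^(i+1) / fact (i+1))"
      unfolding phi_sum by (simp add: sum.lessThan_Suc_shift del: sum.lessThan_Suc)
    have "U n = (2*x)^n * c^(n+1) / fact (n+2) + (\<Sum>i\<le>n. (2*x)^n * c^(n-i) * y^(i+1) / (fact (i+1) * fact (n+2)))"
      unfolding U_def ph by (simp add: add_divide_distrib sum_distrib_left sum_divide_distrib lessThan_Suc_atMost algebra_simps)
    also have "(2*x)^n * c^(n+1) / fact (n+2) = A n"
      unfolding A_def q_def by (simp add: power_mult_distrib algebra_simps)
    also have "(\<Sum>i\<le>n. (2*x)^n * c^(n-i) * y^(i+1) / (fact (i+1) * fact (n+2))) \<le> (\<Sum>i\<le>n. a i * b (n - i))"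
    proof (intro sum_mono)
      fix i assume i: "i \<in> {..n}"
      have e1: "(2*x)^n = (2*x)^i * (2*x)^(n-i)"
      proof -
        have e0: "i + (n - i) = n" using i by simp
        show ?thesis by (simp only: power_add[symmetric] e0)
      qed
      have e: "(2*x)^n * c^(n-i) = (2*x)^i * q^(n-i)"
      proof -
        have "(2*x)^n * c^(n-i) = (2*x)^i * ((2*x)^(n-i) * c^(n-i))" by (subst e1) (simp only: mult.assoc)
        also have "(2*x)^(n-i) * c^(n-i) = q^(n-i)" unfolding q_def by (rule power_mult_distrib[symmetric])
        finally show ?thesis .
      qed
      have f: "(fact (i+2) * fact (n - i) :: real) \<le> fact (n+2)"
      proof -
        have f0: "fact (i+2) * fact (n - i) \<le> (fact (n+2) :: nat)" using fact_split_le i by simp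
        show ?thesis using of_nat_mono[OF f0, where 'a=real] unfolding of_nat_mult of_nat_fact .
      qed
      have fp: "(0::real) < fact (i+1)" by simp
      have "(2*x)^i * q^(n-i) * y^(i+1) / (fact (i+1) * fact (n+2))
          \<le> (2*x)^i * q^(n-i) * y^(i+1) / (fact (i+1) * (fact (i+2) * fact (n - i)))"
      proof (rule divide_left_mono)
        show "fact (i+1) * (fact (i+2) * fact (n - i)) \<le> (fact (i+1) * fact (n+2) :: real)"
          using f fp by (intro mult_left_mono) auto
        show "0 \<le> (2*x)^i * q^(n-i) * y^(i+1)" using x y q0 by simp
        show "0 < (fact (i+1) * fact (n+2)) * (fact (i+1) * (fact (i+2) * fact (n - i)) :: real)"
          by simp
      qed
      also have "\<dots> = a i * b (n - i)" unfolding a_def b_def by (simp add: field_simps)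
      finally show "(2*x)^n * c^(n-i) * y^(i+1) / (fact (i+1) * fact (n+2)) \<le> a i * b (n - i)"
        unfolding e .
    qed
    finally show ?thesis by simp
  qed
  have sumG: "summable (\<lambda>n. (c/2) * (1/3::real)^n)" by (intro summable_mult summable_geometric) auto
  have Ale: "A n \<le> (c/2) * (1/3)^n" for n
  proof -
    have "A n \<le> c * q^n / 2" unfolding A_def
    proof (rule divide_left_mono)
      have "(2::real) = fact 2" by (simp add: numeral_eq_Suc)
      also have "\<dots> \<le> fact (n+2)" by (rule fact_mono) simp
      finally show "2 \<le> (fact (n+2) :: real)" .
    qed (use c q0 in auto)
    also have "\<dots> \<le> c * (1/3)^n / 2" using c q0 q1 by (intro divide_right_mono mult_left_mono power_mono) auto
    finally show ?thesis by simp
  qed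
  have sumA: "summable A" by (rule summable_comparison_test'[OF sumG]) (use A0 Ale in auto)
  have sumA_le: "suminf A \<le> 3*c/4"
  proof -
    have "suminf A \<le> (\<Sum>n. (c/2) * (1/3::real)^n)" by (intro suminf_le sumA sumG Ale)
    also have "\<dots> = (c/2) * (\<Sum>n. (1/3::real)^n)" by (intro suminf_mult summable_geometric) auto
    also have "\<dots> = 3*c/4" by (subst suminf_geometric) auto
    finally show ?thesis .
  qed
  have expS: "(\<lambda>n. z^n / fact n) sums exp z" for z :: real
    using exp_converges[of z] by (simp add: divide_inverse scaleR_conv_of_real mult.commute)
  have sumb: "b sums exp q" unfolding b_def by (rule expS)
  define a' where "a' i = (if i = 0 then y/3 else 0) + (y/6) * ((x*y)^i / fact i)" for i
  have a'S: "a' sums (y/3 + (y/6) * exp (x*y))"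
    unfolding a'_def by (intro sums_add sums_mult expS) (use sums_single[of 0 "\<lambda>_. y/3"] in simp)
  have ale: "a i \<le> a' i" for i
  proof (cases "i = 0")
    case True then show ?thesis by (simp add: a_def a'_def)
  next
    case False
    have f: "(6 * 2 ^ i * fact i :: real) \<le> fact (i+1) * fact (i+2)"
      using of_nat_mono[OF fact_aux[of i], where 'a=real] False unfolding of_nat_mult of_nat_fact by simp
    have "a i = (x^i * y^(i+1)) * 2^i / (fact (i+1) * fact (i+2))" unfolding a_def by (simp add: power_mult_distrib)
    also have "\<dots> \<le> (x^i * y^(i+1)) * 2^i / (6 * 2 ^ i * fact i)"
    proof (rule divide_left_mono)
      show "(6 * 2 ^ i * fact i :: real) \<le> fact (i+1) * fact (i+2)" by (rule f)
      show "0 \<le> (x^i * y^(i+1)) * 2^i" using x y by simp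
      show "0 < (fact (i+1) * fact (i+2)) * (6 * 2 ^ i * fact i :: real)" by simp
    qed
    also have "\<dots> = (y/6) * ((x*y)^i / fact i)" by (simp add: power_mult_distrib field_simps)
    finally show ?thesis using False by (simp add: a'_def)
  qed
  have suma: "summable a" by (rule summable_comparison_test'[OF sums_summable[OF a'S]]) (use a0 ale in auto)
  have suma_le: "suminf a \<le> y/3 + (y/6) * exp (x*y)"
    using suminf_le[OF ale suma sums_summable[OF a'S]] sums_unique[OF a'S] by simp
  have Cs: "summable (\<lambda>n. \<Sum>i\<le>n. a i * b (n - i))" and Ceq: "(\<Sum>n. \<Sum>i\<le>n. a i * b (n - i)) = suminf a * suminf b"
    using summable_Cauchy_product[of a b] Cauchy_product[of a b] suma sums_summable[OF sumb] a0 b0 by auto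
  have expq: "exp q \<le> 3/2"
  proof -
    have "exp q \<le> 1 + q + q^2" using q0 q1 by (intro exp_bound) auto
    also have "\<dots> \<le> 1 + 1/3 + (1/3)^2" using q0 q1 by (intro add_mono power_mono) auto
    finally show ?thesis by (simp add: power2_eq_square)
  qed
  have Cle: "(\<Sum>n. \<Sum>i\<le>n. a i * b (n - i)) \<le> y/2 + y * exp (x*y) / 4"
  proof -
    have "suminf a * suminf b \<le> (y/3 + (y/6) * exp (x*y)) * (3/2)"
      using sums_unique[OF sumb] expq suma_le y exp_ge_zero[of q]
      by (intro mult_mono) (auto intro: suminf_nonneg suma a0 simp del: exp_le_cancel_iff)
    then show ?thesis unfolding Ceq by (simp add: field_simps)
  qed
  have sumR: "summable (\<lambda>n. A n + (\<Sum>i\<le>n. a i * b (n - i)))" by (intro summable_add sumA Cs)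
  have sumU: "summable U" by (rule summable_comparison_test'[OF sumR]) (use U0 Ule in auto)
  have "suminf U \<le> (\<Sum>n. A n + (\<Sum>i\<le>n. a i * b (n - i)))" by (intro suminf_le sumU sumR Ule)
  also have "\<dots> = suminf A + (\<Sum>n. \<Sum>i\<le>n. a i * b (n - i))" by (intro suminf_add[symmetric] sumA Cs)
  also have "\<dots> \<le> 3*c/4 + (y/2 + y * exp (x*y) / 4)" by (intro add_mono sumA_le Cle)
  finally show ?thesis using sumU by simp
qed



lemma lin_aux: fixes y c P Q R :: real
  shows "3*(y+c) \<le> P \<Longrightarrow> R + c \<le> Q \<Longrightarrow> y \<le> R \<Longrightarrow> 0 \<le> y \<Longrightarrow>
    (y + 2*c)/16 + (3*c/4 + y/2 + R/4) \<le> P/8 + Q/2"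
  by (simp add: field_simps)

lemma final_arith:
  fixes y c E1 E2 D :: real
  assumes y: "y \<ge> 0" and c: "c > 0" and E1: "E1 \<ge> 1" and E2: "E2 \<ge> 1" and D: "D \<ge> 0"
  shows "D * ((y + 2*c) / (16*pi) + (3*c/4 + y/2 + y*E1/4) / pi) \<le> D * ((y + c) * (1/8 + 1/(2*pi) * E2 * E1))"
proof (rule mult_left_mono[OF _ D])
  have e1: "(y + 2*c) / (16*pi) + (3*c/4 + y/2 + y*E1/4) / pi = ((y + 2*c)/16 + (3*c/4 + y/2 + y*E1/4)) / pi"
    by (simp add: field_simps)
  have e2: "(y + c) * (1/8 + 1/(2*pi) * E2 * E1) = ((y+c)*pi/8 + (y+c)*(E2*E1)/2) / pi"
    by (simp add: field_simps)
  have h1: "3*(y+c) \<le> (y+c)*pi" using mult_left_mono[of 3 pi "y+c"] y c pi_gt3 by (simp add: mult.commute)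
  have "E2 * E1 \<ge> E1" using E1 E2 by (metis mult_right_mono mult_1 order_trans zero_le_one)
  then have "(y+c)*(E2*E1) \<ge> (y+c)*E1" using y c by (intro mult_left_mono) auto
  moreover have "c * E1 \<ge> c" using c E1 by simp
  ultimately have h2: "(y+c)*(E2*E1) \<ge> y*E1 + c" by (simp add: algebra_simps)
  have h3: "y*E1 \<ge> y" using y E1 by (metis mult_left_mono mult.right_neutral)
  have "(y + 2*c)/16 + (3*c/4 + y/2 + y*E1/4) \<le> (y+c)*pi/8 + (y+c)*(E2*E1)/2"
    using lin_aux[OF h1 h2 h3 y] by simp
  then show "(y + 2*c) / (16*pi) + (3*c/4 + y/2 + y*E1/4) / pi \<le> (y + c) * (1/8 + 1/(2*pi) * E2 * E1)"
    unfolding e1 e2 by (intro divide_right_mono) auto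
qed

theorem theorem7p4:
  fixes b :: "real \<Rightarrow> real" and lam \<Gamma> a C :: real and f v :: "real \<Rightarrow> complex"
  assumes b_smooth: "smooth_real b"
    and b_range: "\<And>\<xi>. 0 \<le> b \<xi> \<and> b \<xi> \<le> 1"
    and b_one: "\<And>\<xi>. \<bar>\<xi>\<bar> \<le> lam \<Longrightarrow> b \<xi> = 1"
    and b_zero: "\<And>\<xi>. \<bar>\<xi>\<bar> \<ge> sqrt 2 * lam \<Longrightarrow> b \<xi> = 0"
    and \<Gamma>_pos: "\<Gamma> > 0" and lam_pos: "lam > 0" and a_pos: "a > 0"
    and C_nonneg: "0 \<le> C" and C_less: "C < 2 * a * lam\<^sup>2"
    and f_int: "integrable lborel f"
    and f_bound: "\<And>\<xi>. \<bar>\<xi>\<bar> \<le> sqrt 2 * lam \<Longrightarrow> norm (f \<xi>) \<le> C * exp (- a * \<bar>\<xi>\<bar>)"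
    and v_int: "integrable lborel v"
    and v_bound: "\<And>\<xi>. norm (v \<xi>) \<le> \<Gamma> * exp (- a * \<bar>\<xi>\<bar>)"
  shows "\<forall>\<xi>. norm (R_op b lam v f \<xi>) \<le> exp (- a * \<bar>\<xi>\<bar>) *
           (C\<^sup>2 / lam\<^sup>2 * ((1 + a * \<bar>\<xi>\<bar>) / a) *
              (1/8 + 1 / (2 * pi) * exp (C / (4 * pi * lam\<^sup>2 * a)) * exp (C / (4 * pi * lam\<^sup>2) * \<bar>\<xi>\<bar>))
            + \<Gamma>)"
proof
  fix \<xi> :: real
  define c where "c = 1 / a"
  define K where "K = C / (2 * lam\<^sup>2)"
  define Kt where "Kt = C / (sqrt 2 * lam)"
  define x where "x = K / (2 * pi)"
  define y where "y = \<bar>\<xi>\<bar>"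
  define e where "e = exp (- a * y)"
  define g where "g = W_b b lam f"
  define gt where "gt = W_b_tilde b lam f"
  have c0: "c > 0" unfolding c_def using a_pos by simp
  have K0: "K \<ge> 0" unfolding K_def using C_nonneg by simp
  have Kt0: "Kt \<ge> 0" unfolding Kt_def using C_nonneg lam_pos by simp
  have x0: "x \<ge> 0" unfolding x_def using K0 by simp
  have y0: "y \<ge> 0" unfolding y_def by simp
  have e0: "e > 0" unfolding e_def by simp
  have s2: "sqrt 2 * sqrt 2 = (2::real)" by simp
  have lam2: "lam\<^sup>2 > 0" using lam_pos by simp
  have small: "\<eta>\<^sup>2 < 2 * lam\<^sup>2" "\<bar>\<eta>\<bar> * (sqrt 2 * lam) < 2 * lam\<^sup>2" if "\<bar>\<eta>\<bar> < sqrt 2 * lam" for \<eta>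
  proof -
    have "\<bar>\<eta>\<bar> * \<bar>\<eta>\<bar> < (sqrt 2 * lam) * (sqrt 2 * lam)"
      using that by (intro mult_strict_mono) auto
    then show "\<eta>\<^sup>2 < 2 * lam\<^sup>2" by (simp add: power2_eq_square algebra_simps)
    have "\<bar>\<eta>\<bar> * (sqrt 2 * lam) < (sqrt 2 * lam) * (sqrt 2 * lam)"
      using that lam_pos by (intro mult_strict_right_mono) auto
    then show "\<bar>\<eta>\<bar> * (sqrt 2 * lam) < 2 * lam\<^sup>2" by (simp add: power2_eq_square algebra_simps)
  qed
  have F1: "norm (g \<eta>) \<le> K * exp (- a * \<bar>\<eta>\<bar>)" for \<eta>
  proof (cases "\<bar>\<eta>\<bar> \<ge> sqrt 2 * lam")
    case True
    then show ?thesis unfolding g_def W_b_def using b_zero K0 by simp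
  next
    case False
    then have lt: "\<bar>\<eta>\<bar> < sqrt 2 * lam" by simp
    have d: "4 * lam\<^sup>2 - \<eta>\<^sup>2 > 2 * lam\<^sup>2" using small(1)[OF lt] by simp
    have dp: "4 * lam\<^sup>2 - \<eta>\<^sup>2 > 0" using d lam2 by linarith
    have "\<bar>b \<eta> / (4 * lam\<^sup>2 - \<eta>\<^sup>2)\<bar> = b \<eta> / (4 * lam\<^sup>2 - \<eta>\<^sup>2)"
      using b_range[of \<eta>] dp by (simp add: abs_divide abs_of_pos)
    also have "\<dots> \<le> 1 / (4 * lam\<^sup>2 - \<eta>\<^sup>2)"
      using b_range[of \<eta>] dp by (intro divide_right_mono) auto
    also have "\<dots> \<le> 1 / (2 * lam\<^sup>2)"
      using d lam2 dp by (intro divide_left_mono) (auto intro: mult_pos_pos)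
    finally have bb: "\<bar>b \<eta> / (4 * lam\<^sup>2 - \<eta>\<^sup>2)\<bar> \<le> 1 / (2 * lam\<^sup>2)" .
    have "norm (g \<eta>) = norm (f \<eta>) * \<bar>b \<eta> / (4 * lam\<^sup>2 - \<eta>\<^sup>2)\<bar>"
      unfolding g_def W_b_def by (simp only: norm_mult norm_of_real)
    also have "\<dots> \<le> (C * exp (- a * \<bar>\<eta>\<bar>)) * (1 / (2 * lam\<^sup>2))"
      using f_bound[of \<eta>] lt bb C_nonneg by (intro mult_mono) auto
    also have "\<dots> = K * exp (- a * \<bar>\<eta>\<bar>)" unfolding K_def by simp
    finally show ?thesis .
  qed
  have F2: "norm (gt \<eta>) \<le> Kt * exp (- a * \<bar>\<eta>\<bar>)" for \<eta>
  proof (cases "\<bar>\<eta>\<bar> \<ge> sqrt 2 * lam")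
    case True
    then show ?thesis unfolding gt_def W_b_tilde_def using b_zero Kt0 by simp
  next
    case False
    then have lt: "\<bar>\<eta>\<bar> < sqrt 2 * lam" by simp
    have d: "4 * lam\<^sup>2 - \<eta>\<^sup>2 > 2 * lam\<^sup>2" using small(1)[OF lt] by simp
    have dd: "\<bar>\<eta>\<bar> * (sqrt 2 * lam) \<le> 4 * lam\<^sup>2 - \<eta>\<^sup>2" using small[OF lt] by simp
    have dp: "4 * lam\<^sup>2 - \<eta>\<^sup>2 > 0" using d lam2 by linarith
    have "\<bar>\<eta> * b \<eta> / (4 * lam\<^sup>2 - \<eta>\<^sup>2)\<bar> = \<bar>\<eta>\<bar> * b \<eta> / (4 * lam\<^sup>2 - \<eta>\<^sup>2)"
      using b_range[of \<eta>] dp by (simp add: abs_mult abs_divide abs_of_pos)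
    also have "\<dots> \<le> \<bar>\<eta>\<bar> / (4 * lam\<^sup>2 - \<eta>\<^sup>2)"
      using b_range[of \<eta>] dp by (intro divide_right_mono) (auto intro: mult_left_le)
    also have "\<dots> \<le> 1 / (sqrt 2 * lam)"
      using d lam2 dd dp lam_pos by (simp add: divide_simps mult.commute)
    finally have bb: "\<bar>\<eta> * b \<eta> / (4 * lam\<^sup>2 - \<eta>\<^sup>2)\<bar> \<le> 1 / (sqrt 2 * lam)" .
    have "norm (gt \<eta>) = norm (f \<eta>) * \<bar>\<eta> * b \<eta> / (4 * lam\<^sup>2 - \<eta>\<^sup>2)\<bar>"
      unfolding gt_def W_b_tilde_def by (simp only: norm_mult norm_of_real) simp
    also have "\<dots> \<le> (C * exp (- a * \<bar>\<eta>\<bar>)) * (1 / (sqrt 2 * lam))"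
      using f_bound[of \<eta>] lt bb C_nonneg by (intro mult_mono) auto
    also have "\<dots> = Kt * exp (- a * \<bar>\<eta>\<bar>)" unfolding Kt_def by simp
    finally show ?thesis .
  qed
  have phi1: "phi c (Suc 0) z = 1" for z by simp
  have N: "norm (nconv gt gt \<xi>) \<le> 1 / (2 * pi) * (Kt * Kt * e * (y + 2 * c))"
  proof -
    have "norm (nconv gt gt \<xi>) \<le> 1 / (2 * pi) *
     (Kt * Kt * exp (- a * \<bar>\<xi>\<bar>) * (phi (1/a) (Suc 1) \<bar>\<xi>\<bar> + (1/a) * phi (1/a) 1 \<bar>\<xi>\<bar>))"
      using F2 by (intro conv_norm[OF a_pos _ Kt0 Kt0]) (auto simp: phi1[unfolded c_def])
    also have "phi (1/a) (Suc 1) \<bar>\<xi>\<bar> + (1/a) * phi (1/a) 1 \<bar>\<xi>\<bar> = y + 2 * c"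
      unfolding y_def c_def by simp
    finally show ?thesis unfolding e_def y_def .
  qed
  have CP: "norm (conv_power g (Suc n) z) \<le> K * (2*x)^n * exp (- a * \<bar>z\<bar>) * phi c (Suc n) \<bar>z\<bar>" for n z
  proof (induction n arbitrary: z)
    case 0
    then show ?case using F1[of z] by (simp add: phi1)
  next
    case (Suc n)
    have "norm (conv_power g (Suc (Suc n)) z) = norm (nconv g (conv_power g (Suc n)) z)" by simp
    also have "\<dots> \<le> 1 / (2 * pi) * (K * (K * (2*x)^n) * exp (- a * \<bar>z\<bar>) *
        (phi (1/a) (Suc (Suc n)) \<bar>z\<bar> + (1/a) * phi (1/a) (Suc n) \<bar>z\<bar>))"
      using F1 Suc.IH K0 x0 unfolding c_def
      by (intro conv_norm[OF a_pos]) (auto simp: mult.assoc)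
    also have "\<dots> \<le> 1 / (2 * pi) * (K * (K * (2*x)^n) * exp (- a * \<bar>z\<bar>) * (2 * phi c (Suc (Suc n)) \<bar>z\<bar>))"
    proof -
      have h: "(1/a) * phi (1/a) (Suc n) \<bar>z\<bar> \<le> phi (1/a) (Suc (Suc n)) \<bar>z\<bar>"
        using a_pos by (intro phi_le_Suc) auto
      then have h2: "phi (1/a) (Suc (Suc n)) \<bar>z\<bar> + (1/a) * phi (1/a) (Suc n) \<bar>z\<bar> \<le> 2 * phi c (Suc (Suc n)) \<bar>z\<bar>"
        unfolding c_def by linarith
      show ?thesis
        by (rule mult_left_mono[OF mult_left_mono[OF h2]]) (use K0 x0 in simp_all)
    qed
    also have "\<dots> = K * (2*x)^Suc n * exp (- a * \<bar>z\<bar>) * phi c (Suc (Suc n)) \<bar>z\<bar>"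
      unfolding x_def by (simp add: field_simps)
    finally show ?case .
  qed
  define U where "U n = (2*x)^n * phi c (n+2) y / fact (n+2)" for n
  have q: "2 * x * c \<le> 1/3"
  proof -
    have "2 * x * c = C / (2 * pi * lam\<^sup>2 * a)" unfolding x_def K_def c_def by (simp add: field_simps)
    also have "\<dots> \<le> (2 * a * lam\<^sup>2) / (2 * pi * lam\<^sup>2 * a)"
      using C_less lam2 a_pos by (intro divide_right_mono) auto
    also have "\<dots> = 1 / pi" using lam2 a_pos by (simp add: field_simps)
    also have "\<dots> \<le> 1/3" using pi_gt3 by (simp add: field_simps)
    finally show ?thesis .
  qed
  have SB: "summable U \<and> suminf U \<le> 3*c/4 + y/2 + y * exp (x*y) / 4"
    unfolding U_def by (rule series_bound[OF c0 x0 y0 q])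
  have tle: "norm (conv_power g (n+2) \<xi> / of_nat (fact (n+2))) \<le> (K * e * (2*x)) * U n" for n
  proof -
    have "norm (conv_power g (n+2) \<xi> / of_nat (fact (n+2))) = norm (conv_power g (Suc (Suc n)) \<xi>) / fact (n+2)"
      by (simp only: norm_divide norm_of_nat of_nat_fact add_2_eq_Suc' norm_fact)
    also have "\<dots> \<le> (K * (2*x)^Suc n * e * phi c (Suc (Suc n)) y) / fact (n+2)"
      using CP[of "Suc n" \<xi>] unfolding e_def y_def by (intro divide_right_mono) auto
    also have "\<dots> = (K * e * (2*x)) * U n" unfolding U_def by (simp add: field_simps)
    finally show ?thesis .
  qed
  have sumT: "summable (\<lambda>n. (K * e * (2*x)) * U n)" using SB by (intro summable_mult) auto
  have sumN: "summable (\<lambda>n. norm (conv_power g (n+2) \<xi> / of_nat (fact (n+2))))"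
    by (rule summable_comparison_test'[OF sumT]) (use tle in auto)
  have Ex: "norm (exp2_star g \<xi>) \<le> (K * e * (2*x)) * (3*c/4 + y/2 + y * exp (x*y) / 4)"
  proof -
    have "norm (exp2_star g \<xi>) \<le> (\<Sum>n. norm (conv_power g (n+2) \<xi> / of_nat (fact (n+2))))"
      unfolding exp2_star_def by (rule summable_norm[OF sumN])
    also have "\<dots> \<le> (\<Sum>n. (K * e * (2*x)) * U n)" by (intro suminf_le sumN sumT tle)
    also have "\<dots> = (K * e * (2*x)) * suminf U" using SB by (intro suminf_mult) auto
    also have "\<dots> \<le> (K * e * (2*x)) * (3*c/4 + y/2 + y * exp (x*y) / 4)"
      using SB K0 e0 x0 by (intro mult_left_mono) auto
    finally show ?thesis .
  qed
  define D where "D = C\<^sup>2 / lam\<^sup>2"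
  have D0: "D \<ge> 0" unfolding D_def by simp
  have KtKt: "Kt * Kt = D / 2" unfolding Kt_def D_def using lam_pos by (simp add: field_simps power2_eq_square)
  have KK: "4 * lam\<^sup>2 * (K * (2 * x)) = D / pi" unfolding K_def x_def D_def using lam_pos
    by (simp add: field_simps power2_eq_square)
  have "norm (R_op b lam v f \<xi>) \<le> norm ((1/4) * nconv gt gt \<xi>) + norm (complex_of_real (4 * lam\<^sup>2) * exp2_star g \<xi>) + norm (v \<xi>)"
    unfolding R_op_def g_def gt_def by (meson norm_triangle_ineq4 norm_triangle_ineq order_trans add_mono order_refl)
  also have "\<dots> = (1/4) * norm (nconv gt gt \<xi>) + 4 * lam\<^sup>2 * norm (exp2_star g \<xi>) + norm (v \<xi>)"
    by (simp only: norm_mult norm_of_real) (simp add: abs_of_nonneg)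
  also have "\<dots> \<le> (1/4) * (1 / (2 * pi) * (Kt * Kt * e * (y + 2 * c)))
      + 4 * lam\<^sup>2 * ((K * e * (2*x)) * (3*c/4 + y/2 + y * exp (x*y) / 4)) + \<Gamma> * e"
    using N Ex v_bound[of \<xi>] unfolding e_def y_def by (intro add_mono mult_left_mono) auto
  also have "\<dots> = e * (D * ((y + 2*c) / (16*pi) + (3*c/4 + y/2 + y * exp (x*y)/4) / pi)) + \<Gamma> * e"
  proof -
    define S where "S = 3*c/4 + y/2 + y * exp (x*y) / 4"
    have t1: "(1/4) * (1 / (2 * pi) * (Kt * Kt * e * (y + 2 * c))) = e * (D * ((y + 2*c) / (16*pi)))"
      unfolding KtKt by (simp add: field_simps)
    have "4 * lam\<^sup>2 * ((K * e * (2*x)) * S) = (4 * lam\<^sup>2 * (K * (2 * x))) * e * S" by (simp only: mult_ac)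
    also have "\<dots> = e * (D * (S / pi))" unfolding KK by simp
    finally have t2: "4 * lam\<^sup>2 * ((K * e * (2*x)) * S) = e * (D * (S / pi))" .
    show ?thesis unfolding S_def[symmetric] t1 t2 by (simp add: algebra_simps)
  qed
  also have "\<dots> \<le> e * (D * ((y + c) * (1/8 + 1/(2*pi) * exp (x * c) * exp (x * y)))) + \<Gamma> * e"
  proof -
    have fa: "D * ((y + 2*c) / (16*pi) + (3*c/4 + y/2 + y*exp (x*y)/4) / pi)
        \<le> D * ((y + c) * (1/8 + 1/(2*pi) * exp (x * c) * exp (x * y)))"
      by (rule final_arith[OF y0 c0 _ _ D0]) (use x0 y0 c0 in auto)
    show ?thesis by (rule add_mono[OF mult_left_mono[OF fa] order_refl]) (use e0 in simp)
  qed
  also have "\<dots> = exp (- a * \<bar>\<xi>\<bar>) *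
           (C\<^sup>2 / lam\<^sup>2 * ((1 + a * \<bar>\<xi>\<bar>) / a) *
              (1/8 + 1 / (2 * pi) * exp (C / (4 * pi * lam\<^sup>2 * a)) * exp (C / (4 * pi * lam\<^sup>2) * \<bar>\<xi>\<bar>))
            + \<Gamma>)"
  proof -
    have q1: "(1 + a * \<bar>\<xi>\<bar>) / a = y + c" unfolding y_def c_def using a_pos by (simp add: field_simps)
    have q2: "C / (4 * pi * lam\<^sup>2 * a) = x * c" unfolding x_def K_def c_def by (simp add: field_simps)
    have q3: "C / (4 * pi * lam\<^sup>2) * \<bar>\<xi>\<bar> = x * y" unfolding x_def K_def y_def by (simp add: field_simps)
    show ?thesis unfolding q1 q2 q3 unfolding e_def y_def D_def by (simp only: algebra_simps)
  qed
  finally show "norm (R_op b lam v f \<xi>) \<le> exp (- a * \<bar>\<xi>\<bar>) *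
           (C\<^sup>2 / lam\<^sup>2 * ((1 + a * \<bar>\<xi>\<bar>) / a) *
              (1/8 + 1 / (2 * pi) * exp (C / (4 * pi * lam\<^sup>2 * a)) * exp (C / (4 * pi * lam\<^sup>2) * \<bar>\<xi>\<bar>))
            + \<Gamma>)" .
qed


end
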